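(* Let $m\geq 13$ and $n\geq 13$ be integers with $m\equiv 2\pmod 3$ and $n\not\equiv 2\pmod 3$. Then $\gamma_{sR}(C_m\vee C_n)=3$.
   Context: $C_n$ denotes the cycle on $n$ vertices. For a graph $G=(V,E)$ and $x\in V$, $N_G[x]=\{x\}\cup\{y: xy\in E\}$. A signed Roman dominating function (SRDF) on $G$ is a function $f:V\to\{-1,1,2\}$ such that (a) $\sum_{y\in N_G[x]}f(y)\geq 1$ for every $x\in V$, and (b) every vertex $x$ with $f(x)=-1$ is adjacent to at least one vertex $y$ with $f(y)=2$. The weight of $f$ is $\sum_{x\in V}f(x)$, and $\gamma_{sR}(G)$ is the minimum weight of an SRDF on $G$. The join $G_1\vee G_2$ of two graphs has vertex set $V(G_1)\cup V(G_2)$ (disjoint union) and edge set $E(G_1)\cup E(G_2)\cup\{uv: u\in V(G_1), v\in V(G_2)\}$. *)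

theory Defs
  imports Main
begin

text \<open>A finite simple graph is represented by a vertex set V and a symmetric,
irreflexive adjacency predicate E.\<close>

definition closed_nbhd :: "'a set \<Rightarrow> ('a \<Rightarrow> 'a \<Rightarrow> bool) \<Rightarrow> 'a \<Rightarrow> 'a set" where
  "closed_nbhd V E x = {x} \<union> {y \<in> V. E x y}"

definition is_SRDF :: "'a set \<Rightarrow> ('a \<Rightarrow> 'a \<Rightarrow> bool) \<Rightarrow> ('a \<Rightarrow> int) \<Rightarrow> bool" where
  "is_SRDF V E f \<longleftrightarrow>
     (\<forall>x\<in>V. f x \<in> {-1, 1, 2}) \<and>
     (\<forall>x\<in>V. (\<Sum>y\<in>closed_nbhd V E x. f y) \<ge> 1) \<and>
     (\<forall>x\<in>V. f x = -1 \<longrightarrow> (\<exists>y\<in>V. E x y \<and> f y = 2))"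

definition SRDF_weight :: "'a set \<Rightarrow> ('a \<Rightarrow> int) \<Rightarrow> int" where
  "SRDF_weight V f = (\<Sum>x\<in>V. f x)"

definition gamma_sR :: "'a set \<Rightarrow> ('a \<Rightarrow> 'a \<Rightarrow> bool) \<Rightarrow> int" where
  "gamma_sR V E = Min {SRDF_weight V f | f. is_SRDF V E f}"

definition cycle_V :: "nat \<Rightarrow> nat set" where
  "cycle_V n = {0..<n}"

definition cycle_E :: "nat \<Rightarrow> nat \<Rightarrow> nat \<Rightarrow> bool" where
  "cycle_E n i j \<longleftrightarrow> i < n \<and> j < n \<and> i \<noteq> j \<and> (j = (i + 1) mod n \<or> i = (j + 1) mod n)"

definition join_V :: "'a set \<Rightarrow> 'b set \<Rightarrow> ('a + 'b) set" where
  "join_V V1 V2 = V1 <+> V2"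

fun join_E :: "('a \<Rightarrow> 'a \<Rightarrow> bool) \<Rightarrow> ('b \<Rightarrow> 'b \<Rightarrow> bool) \<Rightarrow> ('a + 'b) \<Rightarrow> ('a + 'b) \<Rightarrow> bool" where
  "join_E E1 E2 (Inl a) (Inl a') = E1 a a'"
| "join_E E1 E2 (Inr b) (Inr b') = E2 b b'"
| "join_E E1 E2 (Inl a) (Inr b) = True"
| "join_E E1 E2 (Inr b) (Inl a) = True"

end

theory Submission
  imports Defs
begin

definition nx :: "nat \<Rightarrow> nat \<Rightarrow> nat" where "nx n i = (if Suc i = n then 0 else Suc i)"
definition pv :: "nat \<Rightarrow> nat \<Rightarrow> nat" where "pv n i = (if i = 0 then n - 1 else i - 1)"
definition cs :: "nat \<Rightarrow> (nat \<Rightarrow> int) \<Rightarrow> nat \<Rightarrow> int" where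
  "cs n g i = g (pv n i) + g i + g (nx n i)"

lemma mod_suc_lt: "i < n \<Longrightarrow> (i + 1) mod n = nx n i"
  unfolding nx_def by (simp add: mod_Suc)

lemma cycE_iff: "i < n \<Longrightarrow> j < n \<Longrightarrow> cycle_E n i j \<longleftrightarrow> i \<noteq> j \<and> (j = nx n i \<or> j = pv n i)"
  unfolding cycle_E_def using mod_suc_lt[of i n] mod_suc_lt[of j n]
  by (auto simp: nx_def pv_def split: if_splits)

lemma cyc_nbhd: "3 \<le> n \<Longrightarrow> i < n \<Longrightarrow> closed_nbhd (cycle_V n) (cycle_E n) i = {pv n i, i, nx n i}"
  unfolding closed_nbhd_def cycle_V_def
  by (auto simp: cycE_iff nx_def pv_def split: if_splits)

lemma cyc_sum: "3 \<le> n \<Longrightarrow> i < n \<Longrightarrow> (\<Sum>y\<in>closed_nbhd (cycle_V n) (cycle_E n) i. g y) = cs n g i"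
proof -
  assume a: "3 \<le> n" "i < n"
  have d: "pv n i \<noteq> i" "pv n i \<noteq> nx n i" "i \<noteq> nx n i" using a by (auto simp: nx_def pv_def)
  show ?thesis using d by (simp add: cyc_nbhd[OF a] cs_def)
qed

lemma join_nbhd_l: "closed_nbhd (join_V V1 V2) (join_E E1 E2) (Inl i) = Inl ` closed_nbhd V1 E1 i \<union> Inr ` V2"
  unfolding closed_nbhd_def join_V_def
  by auto

lemma join_nbhd_r: "closed_nbhd (join_V V1 V2) (join_E E1 E2) (Inr i) = Inl ` V1 \<union> Inr ` closed_nbhd V2 E2 i"
  unfolding closed_nbhd_def join_V_def
  by auto

lemma sum_lr: "finite A \<Longrightarrow> finite B \<Longrightarrow> (\<Sum>x\<in>Inl ` A \<union> Inr ` B. f x) = (\<Sum>x\<in>A. f (Inl x)) + (\<Sum>x\<in>B. f (Inr x))"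
  by (subst sum.union_disjoint) (auto simp: sum.reindex)

lemma cyc_fin: "finite (closed_nbhd (cycle_V n) (cycle_E n) i)"
  unfolding closed_nbhd_def cycle_V_def by auto

lemma sum_nx: "0 < n \<Longrightarrow> (\<Sum>i<n. g (nx n i)) = (\<Sum>i<n. g i)"
proof -
  assume "0 < n" then obtain k where n: "n = Suc k" by (cases n) auto
  have "(\<Sum>i<Suc k. g (nx (Suc k) i)) = (\<Sum>i<k. g (Suc i)) + g 0"
    by (simp add: nx_def)
  also have "\<dots> = (\<Sum>i<Suc k. g i)" by (subst sum.lessThan_Suc_shift) (simp add: add.commute)
  finally show ?thesis using n by simp
qed

lemma sum_pv: "0 < n \<Longrightarrow> (\<Sum>i<n. g (pv n i)) = (\<Sum>i<n. g i)"
proof -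
  assume "0 < n" then obtain k where n: "n = Suc k" by (cases n) auto
  have "(\<Sum>i<Suc k. g (pv (Suc k) i)) = g k + (\<Sum>i<k. g i)"
    by (subst sum.lessThan_Suc_shift) (simp add: pv_def)
  also have "\<dots> = (\<Sum>i<Suc k. g i)" by (simp add: add.commute)
  finally show ?thesis using n by simp
qed

lemma sum_cs: "0 < n \<Longrightarrow> (\<Sum>i<n. cs n g i) = 3 * (\<Sum>i<n. g i)"
  by (simp add: cs_def sum.distrib sum_nx sum_pv)

lemma per_sum: "(\<Sum>i<3*q. h (i mod 3)) = int q * (h 0 + h 1 + h 2 :: int)"
proof (induction q)
  case 0 then show ?case by simp
next
  case (Suc q)
  have e: "3 * Suc q = Suc (Suc (Suc (3*q)))" by simp
  show ?case unfolding e using Suc by (simp add: algebra_simps mod_Suc numeral_2_eq_2)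
qed


lemma mod3_cases0: "((j::nat) mod 3 = 0 \<and> Suc j mod 3 = 1 \<and> Suc (Suc j) mod 3 = 2) \<or>
   (j mod 3 = 1 \<and> Suc j mod 3 = 2 \<and> Suc (Suc j) mod 3 = 0) \<or>
   (j mod 3 = 2 \<and> Suc j mod 3 = 0 \<and> Suc (Suc j) mod 3 = 1)"
proof -
  have "j mod 3 < 3" by simp
  then consider "j mod 3 = 0" | "j mod 3 = 1" | "j mod 3 = 2" by linarith
  then show ?thesis by cases (simp_all add: mod_Suc)
qed

lemma mod3_cases: "0 < (i::nat) \<Longrightarrow>
   (i mod 3 = 0 \<and> (i - 1) mod 3 = 2 \<and> Suc i mod 3 = 1) \<or>
   (i mod 3 = 1 \<and> (i - 1) mod 3 = 0 \<and> Suc i mod 3 = 2) \<or>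
   (i mod 3 = 2 \<and> (i - 1) mod 3 = 1 \<and> Suc i mod 3 = 0)"
  using mod3_cases0[of "i - 1"] by (cases i) auto

lemma cs_f1: assumes "m mod 3 = 2" "5 \<le> m" "i < m"
  shows "cs m (\<lambda>i. if i mod 3 = 1 then 2 else -1) i \<ge> 0"
proof -
  consider "i = 0" | "Suc i = m" | "0 < i" "Suc i < m" using assms by linarith
  then show ?thesis
  proof cases
    case 1
    have "(m - 1) mod 3 = 1" using assms mod3_cases0[of "m - 1"] by (cases m) auto
    then show ?thesis using 1 assms by (simp add: cs_def pv_def nx_def)
  next
    case 2
    have "(m - 2) mod 3 = 0" "(m - 1) mod 3 = 1"
      using assms mod3_cases0[of "m - 2"] by (cases m; cases "m - 1"; auto)+
    then have "(i - 1) mod 3 = 0" "i mod 3 = 1" using 2 by (auto simp: numeral_2_eq_2)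
    then show ?thesis using 2 assms by (simp add: cs_def pv_def nx_def)
  next
    case 3
    then show ?thesis using mod3_cases[of i] by (auto simp add: cs_def pv_def nx_def)
  qed
qed

lemma cs_f2: assumes "n mod 3 \<noteq> 2" "5 \<le> n" "i < n"
  shows "cs n (\<lambda>j. if j mod 3 = 0 then 2 else if j = n - 1 then 1 else -1) i \<ge> 0"
proof -
  consider "i = 0" | "Suc i = n" | "Suc (Suc i) = n" | "0 < i" "Suc (Suc i) < n" using assms by linarith
  then show ?thesis
  proof cases
    case 1
    then show ?thesis using assms by (auto simp add: cs_def pv_def nx_def)
  next
    case 2
    then show ?thesis using assms mod3_cases[of i] by (auto simp add: cs_def pv_def nx_def)
  next
    case 3
    have "0 < i" using 3 assms by linarith
    then show ?thesis using 3 assms mod3_cases[of i] by (auto simp add: cs_def pv_def nx_def)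
  next
    case 4
    then show ?thesis using mod3_cases[of i] by (auto simp add: cs_def pv_def nx_def)
  qed
qed


lemma mod3_m: "(m::nat) mod 3 = 2 \<Longrightarrow> \<exists>q. m = Suc (Suc (3 * q))"
  using div_mult_mod_eq[of m 3] by (intro exI[of _ "m div 3"]) linarith

lemma pvnx: "3 \<le> n \<Longrightarrow> i < n \<Longrightarrow> pv n i < n \<and> nx n i < n \<and> nx n (pv n i) = i \<and> pv n (nx n i) = i"
  by (auto simp: pv_def nx_def)

lemma no_one:
  assumes n4: "4 \<le> n" and vals: "\<forall>i<n. g i \<in> {-1,1,2}" and nn: "\<forall>i<n. cs n g i \<ge> 0"
    and s1: "(\<Sum>i<n. g i) = 1"
  shows "n mod 3 = 2"
proof (cases "\<exists>j<n. g j = 1")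
  case True
  then obtain j where j: "j < n" "g j = 1" by blast
  have tot: "(\<Sum>i<n. cs n g i) = 3" using sum_cs[of n g] s1 n4 by simp
  have sub: "sum (cs n g) S \<le> 3" if "S \<subseteq> {..<n}" for S
  proof -
    have "sum (cs n g) S \<le> sum (cs n g) {..<n}"
      by (rule sum_mono2) (use that nn in auto)
    then show ?thesis using tot by simp
  qed
  have pos: "cs n g i \<ge> 1" if "i < n" "g (pv n i) = 1 \<or> g i = 1 \<or> g (nx n i) = 1" for i
  proof -
    have a: "g (pv n i) \<in> {-1,1,2}" "g i \<in> {-1,1,2}" "g (nx n i) \<in> {-1,1,2}"
      using vals pvnx[of n i] n4 that(1) by auto
    have "cs n g i \<ge> 0" using nn that(1) by auto
    then show ?thesis using a that(2) unfolding cs_def by auto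
  qed
  let ?p = "pv n j" and ?q = "nx n j"
  have P: "?p < n" "?q < n" "nx n ?p = j" "pv n ?q = j" using pvnx[of n j] n4 j by auto
  have c1: "cs n g ?p \<ge> 1" "cs n g j \<ge> 1" "cs n g ?q \<ge> 1"
    using pos[of ?p] pos[of j] pos[of ?q] P j by auto
  have d3: "?p \<noteq> j" "?p \<noteq> ?q" "j \<noteq> ?q" using n4 j by (auto simp: pv_def nx_def)
  show ?thesis
  proof (cases "cs n g j \<ge> 2")
    case True
    have "sum (cs n g) {?p, j, ?q} \<le> 3" using sub[of "{?p, j, ?q}"] P j by auto
    then show ?thesis using d3 c1 True by simp
  next
    case False
    then have "cs n g j = 1" using c1 by simp
    then have "g ?p + g ?q = 0" using j by (simp add: cs_def)
    moreover have "g ?p \<in> {-1,1,2}" "g ?q \<in> {-1,1,2}" using vals P by auto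
    ultimately have "g ?p = 1 \<or> g ?q = 1" by auto
    then show ?thesis
    proof
      assume gp: "g ?p = 1"
      let ?k = "pv n ?p"
      have K: "?k < n" "nx n ?k = ?p" using pvnx[of n ?p] P n4 by auto
      have ck: "cs n g ?k \<ge> 1" using pos[of ?k] K gp by auto
      have d: "?k \<noteq> ?p" "?k \<noteq> j" "?k \<noteq> ?q" using n4 j by (auto simp: pv_def nx_def)
      have "sum (cs n g) {?k, ?p, j, ?q} \<le> 3" using sub[of "{?k, ?p, j, ?q}"] P K j by auto
      then show ?thesis using d3 d c1 ck by simp
    next
      assume gq: "g ?q = 1"
      let ?k = "nx n ?q"
      have K: "?k < n" "pv n ?k = ?q" using pvnx[of n ?q] P n4 by auto
      have ck: "cs n g ?k \<ge> 1" using pos[of ?k] K gq by auto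
      have d: "?k \<noteq> ?p" "?k \<noteq> j" "?k \<noteq> ?q" using n4 j by (auto simp: pv_def nx_def)
      have "sum (cs n g) {?k, ?p, j, ?q} \<le> 3" using sub[of "{?k, ?p, j, ?q}"] P K j by auto
      then show ?thesis using d3 d c1 ck by simp
    qed
  qed
next
  case False
  have "3 dvd (\<Sum>i<n. g i + 1)"
  proof (rule dvd_sum)
    fix i assume "i \<in> {..<n}"
    then have "g i = -1 \<or> g i = 2" using False vals by auto
    then show "3 dvd g i + 1" by auto
  qed
  moreover have "(\<Sum>i<n. g i + 1) = 1 + int n" using s1 by (simp add: sum.distrib)
  ultimately have "3 dvd (1 + int n)" by simp
  then show ?thesis by presburger
qed


theorem mainTheorem10:
  fixes m n :: nat
  assumes "m \<ge> 13" and "n \<ge> 13" and "m mod 3 = 2" and "n mod 3 \<noteq> 2"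
  shows "gamma_sR (join_V (cycle_V m) (cycle_V n)) (join_E (cycle_E m) (cycle_E n)) = 3"
proof -
  define V where "V = join_V (cycle_V m) (cycle_V n)"
  define E where "E = join_E (cycle_E m) (cycle_E n)"
  define W where "W = {SRDF_weight V f | f. is_SRDF V E f}"
  have Veq: "V = Inl ` {..<m} \<union> Inr ` {..<n}"
    unfolding V_def join_V_def cycle_V_def Plus_def by (simp add: atLeast0LessThan)
  have finV: "finite V" unfolding Veq by simp
  have wsplit: "SRDF_weight V f = (\<Sum>i<m. f (Inl i)) + (\<Sum>j<n. f (Inr j))" for f
    unfolding SRDF_weight_def Veq by (rule sum_lr) auto
  have nbl: "(\<Sum>y\<in>closed_nbhd V E (Inl i). f y) = cs m (\<lambda>i. f (Inl i)) i + (\<Sum>j<n. f (Inr j))"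
    if "i < m" for f i
  proof -
    have "(\<Sum>y\<in>closed_nbhd V E (Inl i). f y)
        = (\<Sum>x\<in>closed_nbhd (cycle_V m) (cycle_E m) i. f (Inl x)) + (\<Sum>x\<in>cycle_V n. f (Inr x))"
      unfolding V_def E_def join_nbhd_l by (rule sum_lr) (rule cyc_fin, simp add: cycle_V_def)
    also have "\<dots> = cs m (\<lambda>i. f (Inl i)) i + (\<Sum>j<n. f (Inr j))"
      using cyc_sum[of m i "\<lambda>x. f (Inl x)"] that assms by (simp add: cycle_V_def atLeast0LessThan)
    finally show ?thesis .
  qed
  have nbr: "(\<Sum>y\<in>closed_nbhd V E (Inr i). f y) = (\<Sum>j<m. f (Inl j)) + cs n (\<lambda>i. f (Inr i)) i"
    if "i < n" for f i
  proof -
    have "(\<Sum>y\<in>closed_nbhd V E (Inr i). f y)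
        = (\<Sum>x\<in>cycle_V m. f (Inl x)) + (\<Sum>x\<in>closed_nbhd (cycle_V n) (cycle_E n) i. f (Inr x))"
      unfolding V_def E_def join_nbhd_r by (rule sum_lr) (simp add: cycle_V_def, rule cyc_fin)
    also have "\<dots> = (\<Sum>j<m. f (Inl j)) + cs n (\<lambda>i. f (Inr i)) i"
      using cyc_sum[of n i "\<lambda>x. f (Inr x)"] that assms by (simp add: cycle_V_def atLeast0LessThan)
    finally show ?thesis .
  qed
  have lower: "3 \<le> w" if "w \<in> W" for w
  proof -
    obtain f where w: "w = SRDF_weight V f" and sr: "is_SRDF V E f" using \<open>w \<in> W\<close> W_def by auto
    define A where "A = (\<Sum>i<m. f (Inl i))"
    define B where "B = (\<Sum>j<n. f (Inr j))"
    have cl: "cs m (\<lambda>i. f (Inl i)) i + B \<ge> 1" if "i < m" for i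
    proof -
      have "Inl i \<in> V" unfolding Veq using that by auto
      then have "1 \<le> sum f (closed_nbhd V E (Inl i))" using sr unfolding is_SRDF_def by blast
      then show ?thesis using nbl[OF that, of f] B_def by simp
    qed
    have cr: "cs n (\<lambda>i. f (Inr i)) i + A \<ge> 1" if "i < n" for i
    proof -
      have "Inr i \<in> V" unfolding Veq using that by auto
      then have "1 \<le> sum f (closed_nbhd V E (Inr i))" using sr unfolding is_SRDF_def by blast
      then show ?thesis using nbr[OF that, of f] A_def by simp
    qed
    have vr: "\<forall>i<n. f (Inr i) \<in> {-1,1,2}"
    proof (intro allI impI)
      fix i assume "i < n"
      then have "Inr i \<in> V" unfolding Veq by auto
      then show "f (Inr i) \<in> {-1,1,2}" using sr unfolding is_SRDF_def by blast
    qed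
    have h1: "3 * A + int m * B \<ge> int m"
    proof -
      have "(\<Sum>i<m. (1::int)) \<le> (\<Sum>i<m. cs m (\<lambda>i. f (Inl i)) i + B)"
        by (rule sum_mono) (use cl in auto)
      also have "\<dots> = 3 * A + int m * B" using assms
        by (simp add: sum.distrib sum_cs A_def)
      finally show ?thesis by simp
    qed
    have h2: "3 * B + int n * A \<ge> int n"
    proof -
      have "(\<Sum>i<n. (1::int)) \<le> (\<Sum>i<n. cs n (\<lambda>i. f (Inr i)) i + A)"
        by (rule sum_mono) (use cr in auto)
      also have "\<dots> = 3 * B + int n * A" using assms
        by (simp add: sum.distrib sum_cs B_def)
      finally show ?thesis by simp
    qed
    have "3 \<le> A + B"
    proof (cases "B \<le> 0")
      case True
      have "(int m - 3) * B \<le> 0" using True assms by (simp add: mult_nonneg_nonpos)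
      then have "int m * B - 3 * B \<le> 0" by (simp add: algebra_simps)
      then show ?thesis using h1 assms by linarith
    next
      case Bp: False
      show ?thesis
      proof (cases "A \<le> 0")
        case True
        have "(int n - 3) * A \<le> 0" using True assms by (simp add: mult_nonneg_nonpos)
        then have "int n * A - 3 * A \<le> 0" by (simp add: algebra_simps)
        then show ?thesis using h2 assms by linarith
      next
        case False
        show ?thesis
        proof (rule ccontr)
          assume "\<not> 3 \<le> A + B"
          then have "A = 1" "B = 1" using False Bp by auto
          then have "\<forall>i<n. cs n (\<lambda>i. f (Inr i)) i \<ge> 0" using cr by fastforce
          then have "n mod 3 = 2" using no_one[of n "\<lambda>i. f (Inr i)"] vr \<open>B = 1\<close> assms
            unfolding B_def by auto
          then show False using assms by simp
        qed
      qed
    qed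
    then show ?thesis using w wsplit A_def B_def by simp
  qed
  define f1 :: "nat \<Rightarrow> int" where "f1 = (\<lambda>i. if i mod 3 = 1 then 2 else -1)"
  define f2 :: "nat \<Rightarrow> int" where "f2 = (\<lambda>j. if j mod 3 = 0 then 2 else if j = n - 1 then 1 else -1)"
  define f where "f = case_sum f1 f2"
  have sf1: "(\<Sum>i<m. f1 i) = 1"
  proof -
    obtain q where q: "m = Suc (Suc (3 * q))" using assms by (metis mod3_m)
    have "(\<Sum>i<3 * q. f1 i) = 0" using per_sum[of "\<lambda>k. if k = 1 then 2 else -1" q]
      unfolding f1_def by simp
    then show ?thesis unfolding q by (simp add: f1_def mod_Suc)
  qed
  have sf2: "(\<Sum>i<n. f2 i) = 2"
  proof -
    have hs: "(\<Sum>i<3*q. f2 i) = 0" if "3*q \<le> n - 1" for q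
    proof -
      have "(\<Sum>i<3*q. f2 i) = (\<Sum>i<3*q. (\<lambda>k. if k = 0 then (2::int) else -1) (i mod 3))"
        by (rule sum.cong) (use that in \<open>auto simp: f2_def\<close>)
      also have "\<dots> = 0" using per_sum[of "\<lambda>k. if k = 0 then (2::int) else -1" q] by simp
      finally show ?thesis .
    qed
    have "n mod 3 < 3" by simp
    then consider "n mod 3 = 0" | "n mod 3 = 1" using assms by linarith
    then show ?thesis
    proof cases
      case 1
      obtain q where q: "n = 3 * q" using 1 div_mult_mod_eq[of n 3] by (intro that[of "n div 3"]) linarith
      then obtain p where p: "q = Suc p" using assms by (cases q) auto
      have n: "n = Suc (Suc (Suc (3 * p)))" using q p by simp
      have "(\<Sum>i<n. f2 i) = (\<Sum>i<3*p. f2 i) + f2 (3*p) + f2 (Suc (3*p)) + f2 (Suc (Suc (3*p)))"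
        unfolding n by simp
      also have "\<dots> = 2" using hs[of p] n by (simp add: f2_def mod_Suc)
      finally show ?thesis .
    next
      case 2
      obtain q where n: "n = Suc (3 * q)" using 2 div_mult_mod_eq[of n 3] by (intro that[of "n div 3"]) linarith
      have "(\<Sum>i<n. f2 i) = (\<Sum>i<3*q. f2 i) + f2 (3*q)"
        unfolding n by simp
      also have "\<dots> = 2" using hs[of q] n by (simp add: f2_def)
      finally show ?thesis .
    qed
  qed
  have upper: "3 \<in> W"
  proof -
    have "is_SRDF V E f"
      unfolding is_SRDF_def
    proof (intro conjI)
      show "\<forall>x\<in>V. f x \<in> {- 1, 1, 2}" unfolding Veq f_def f1_def f2_def by (auto split: if_splits)
      show "\<forall>x\<in>V. 1 \<le> sum f (closed_nbhd V E x)"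
      proof
        fix x assume "x \<in> V"
        then consider i where "x = Inl i" "i < m" | i where "x = Inr i" "i < n" unfolding Veq by auto
        then show "1 \<le> sum f (closed_nbhd V E x)"
        proof cases
          case 1
          have "cs m f1 i \<ge> 0" using cs_f1[of m i] assms 1 unfolding f1_def by simp
          then show ?thesis using nbl[of i f] 1 sf2 unfolding f_def by simp
        next
          case 2
          have "cs n f2 i \<ge> 0" using cs_f2[of n i] assms 2 unfolding f2_def by simp
          then show ?thesis using nbr[of i f] 2 sf1 unfolding f_def by simp
        qed
      qed
      show "\<forall>x\<in>V. f x = - 1 \<longrightarrow> (\<exists>y\<in>V. E x y \<and> f y = 2)"
      proof
        fix x assume "x \<in> V"
        then consider i where "x = Inl i" "i < m" | i where "x = Inr i" "i < n" unfolding Veq by auto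
        then show "f x = - 1 \<longrightarrow> (\<exists>y\<in>V. E x y \<and> f y = 2)"
        proof cases
          case 1
          have "Inr 0 \<in> V" "E x (Inr 0)" "f (Inr 0) = 2"
            using assms 1 unfolding Veq E_def f_def f2_def by auto
          then show ?thesis by blast
        next
          case 2
          have "Inl 1 \<in> V" "E x (Inl 1)" "f (Inl 1) = 2"
            using assms 2 unfolding Veq E_def f_def f1_def by auto
          then show ?thesis by blast
        qed
      qed
    qed
    moreover have "SRDF_weight V f = 3" using wsplit sf1 sf2 unfolding f_def by simp
    ultimately show ?thesis unfolding W_def by force
  qed
  have finW: "finite W"
  proof (rule finite_subset)
    show "W \<subseteq> {-(2 * int (card V))..2 * int (card V)}"
    proof
      fix w assume "w \<in> W"
      then obtain f where w: "w = SRDF_weight V f" and sr: "is_SRDF V E f" using W_def by auto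
      have v: "\<forall>x\<in>V. f x \<in> {-1,1,2}" using sr unfolding is_SRDF_def by auto
      have "(\<Sum>x\<in>V. f x) \<le> (\<Sum>x\<in>V. 2)" by (rule sum_mono) (use v in auto)
      moreover have "(\<Sum>x\<in>V. -2) \<le> (\<Sum>x\<in>V. f x)" by (rule sum_mono) (use v in auto)
      ultimately show "w \<in> {-(2 * int (card V))..2 * int (card V)}"
        using w unfolding SRDF_weight_def by simp
    qed
  qed simp
  have "Min W = 3" by (rule Min_eqI[OF finW]) (use lower upper in auto)
  then show ?thesis unfolding W_def V_def E_def gamma_sR_def by simp
qed

end
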